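(* Let $V = V_1 \oplus V_2$ be a finite-dimensional complex vector space, $T = \mathrm{Sym}(V^* )$, $T_i = \mathrm{Sym}(V_i^* ) \subset T$. Let $d \ge 2$, $F_i \in S^d V_i$ for $i=1,2$, and $F = F_1 + F_2 \in S^d V$. Let $l_i \in V_i^*$ with $l_i \notin F_i^\perp$ (the perp ideal of $F_i$ in $T_i$) for $i = 1,2$. Then <ol> <li>$F^\perp + (l_1 + l_2) \subsetneq \big[F_1^\perp + (l_1) + (V_2^* )\big] \cap \big[F_2^\perp + (l_2) + (V_1^* )\big]$ as ideals of $T$;</li> <li>$\dim_{\mathbb{C}} T/(F^\perp + (l_1+l_2)) \ge \dim_{\mathbb{C}} T_1/(F_1^\perp + (l_1)) + \dim_{\mathbb{C}} T_2/(F_2^\perp + (l_2))$.</li> </ol>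
   Context: For a complex vector space $W$, $\mathrm{Sym}(W^* )$ acts on $\mathrm{Sym}(W)$ by differentiation. For $G \in S^d W$, the perp ideal is $G^\perp = \{ g \in \mathrm{Sym}(W^* ) : g \cdot G = 0 \}$. $F^\perp$ denotes the perp ideal of $F$ in $T$; $(V_j^* )$ denotes the ideal of $T$ generated by $V_j^*$, and ideals of $T_i$ are regarded in $T$ via $T_i \subset T$ (generating ideals there). *)

theory Defs
  imports Complex_Main "HOL-Library.Poly_Mapping" "HOL-Library.Extended_Nat"
begin

text \<open>Polynomials over \<complex> in the variables of type 'v (a basis of V, resp. the dual basis
of V^*): maps from exponent vectors (monomials) to coefficients.  The same type is used
for Sym(V^*) (operators) and for Sym(V) (forms being differentiated).\<close>

type_synonym 'v mpoly = "('v \<Rightarrow>\<^sub>0 nat) \<Rightarrow>\<^sub>0 complex"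

text \<open>Polynomials only involving the variables in X (the subring Sym(W^*) for W spanned by X).\<close>
definition Poly :: "'v set \<Rightarrow> 'v mpoly set" where
  "Poly X = {p :: 'v mpoly. \<forall>m\<in>Poly_Mapping.keys p. Poly_Mapping.keys m \<subseteq> X}"

definition total_deg :: "('v \<Rightarrow>\<^sub>0 nat) \<Rightarrow> nat" where
  "total_deg m = (\<Sum>v\<in>Poly_Mapping.keys m. Poly_Mapping.lookup m v)"

definition Hom :: "'v set \<Rightarrow> nat \<Rightarrow> 'v mpoly set" where
  "Hom X d = {p \<in> Poly X. \<forall>m\<in>Poly_Mapping.keys p. total_deg m = d}"

definition LinForms :: "'v set \<Rightarrow> 'v mpoly set" where
  "LinForms X = Hom X 1"

text \<open>Action of Sym(V^*) on Sym(V) by differentiation: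
  \<partial>^\<alpha> y^\<beta> = (\<Prod>_v \<beta>_v!/(\<beta>_v-\<alpha>_v)!) y^(\<beta>-\<alpha>) if \<alpha> \<le> \<beta>, and 0 otherwise;
  extended bilinearly.\<close>
definition act :: "'v mpoly \<Rightarrow> 'v mpoly \<Rightarrow> 'v mpoly" where
  "act g F = (\<Sum>\<alpha>\<in>Poly_Mapping.keys g. \<Sum>\<beta>\<in>Poly_Mapping.keys F.
     if (\<forall>v. Poly_Mapping.lookup \<alpha> v \<le> Poly_Mapping.lookup \<beta> v)
     then Poly_Mapping.single (\<beta> - \<alpha>)
            (Poly_Mapping.lookup g \<alpha> * Poly_Mapping.lookup F \<beta> *
             (\<Prod>v\<in>Poly_Mapping.keys \<beta>. of_nat (fact (Poly_Mapping.lookup \<beta> v)) / of_nat (fact (Poly_Mapping.lookup \<beta> v - Poly_Mapping.lookup \<alpha> v))))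
     else 0)"

definition perp :: "'v set \<Rightarrow> 'v mpoly \<Rightarrow> 'v mpoly set" where
  "perp X F = {g \<in> Poly X. act g F = 0}"

definition ideal_gen :: "'v set \<Rightarrow> 'v mpoly set \<Rightarrow> 'v mpoly set" where
  "ideal_gen X G = {p. \<exists>A f. finite A \<and> A \<subseteq> G \<and> (\<forall>a\<in>A. f a \<in> Poly X) \<and> p = (\<Sum>a\<in>A. f a * a)}"

text \<open>\<complex>-linear span (scalar multiplication = multiplication by a constant polynomial).\<close>
definition cspan :: "'v mpoly set \<Rightarrow> 'v mpoly set" where
  "cspan S = {p. \<exists>c. p = (\<Sum>s\<in>S. Poly_Mapping.single 0 (c s) * s)}"

text \<open>dim_\<complex> (R / I): least size of a finite subset of R spanning R modulo I
  (\<infinity> if there is none).\<close>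
definition spans_mod :: "'v mpoly set \<Rightarrow> 'v mpoly set \<Rightarrow> 'v mpoly set \<Rightarrow> bool" where
  "spans_mod R I S \<longleftrightarrow> finite S \<and> S \<subseteq> R \<and> R \<subseteq> {s + i | s i. s \<in> cspan S \<and> i \<in> I}"

definition quot_dim :: "'v mpoly set \<Rightarrow> 'v mpoly set \<Rightarrow> enat" where
  "quot_dim R I = (if \<exists>S. spans_mod R I S
     then enat (LEAST n. \<exists>S. spans_mod R I S \<and> card S = n) else \<infinity>)"

end

theory Submission
  imports Defs
begin

abbreviation lk where "lk \<equiv> Poly_Mapping.lookup"
abbreviation ks where "ks \<equiv> Poly_Mapping.keys"
abbreviation sng where "sng \<equiv> Poly_Mapping.single"

lemma lookup_minus_nat: "lk ((m::'v \<Rightarrow>\<^sub>0 nat) - n) v = lk m v - lk n v"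
  by (simp add: minus_poly_mapping.rep_eq)

lemma keys_add_nat: "ks ((m::'v \<Rightarrow>\<^sub>0 nat) + n) = ks m \<union> ks n"
  by (auto simp: in_keys_iff lookup_add)

lemma expand: "p = (\<Sum>m\<in>ks p. sng m (lk p m))"
proof (rule poly_mapping_eqI)
  fix k
  have "(\<Sum>m\<in>ks p. lk (sng m (lk p m)) k) = lk p k"
    by (cases "k \<in> ks p") (auto simp: lookup_single when_def in_keys_iff)
  then show "lk p k = lk (\<Sum>m\<in>ks p. sng m (lk p m)) k"
    by (simp add: lookup_sum)
qed

lemma mult_expand: "p * q = (\<Sum>m\<in>ks p. \<Sum>n\<in>ks q. sng (m+n) (lk p m * lk q n))"
proof -
  have "p * q = (\<Sum>m\<in>ks p. sng m (lk p m)) * (\<Sum>n\<in>ks q. sng n (lk q n))"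
    using expand[of p] expand[of q] by simp
  also have "\<dots> = (\<Sum>m\<in>ks p. \<Sum>n\<in>ks q. sng m (lk p m) * sng n (lk q n))"
    by (simp add: sum_product)
  finally show ?thesis by (simp add: mult_single)
qed

definition restr :: "'v set \<Rightarrow> 'v mpoly \<Rightarrow> 'v mpoly" where
  "restr X p = (\<Sum>m\<in>{m\<in>ks p. ks m \<subseteq> X}. sng m (lk p m))"

lemma lookup_restr: "lk (restr X p) k = (if ks k \<subseteq> X then lk p k else 0)"
proof -
  have "(\<Sum>m\<in>{m\<in>ks p. ks m \<subseteq> X}. lk (sng m (lk p m)) k) = (if ks k \<subseteq> X then lk p k else 0)"
    by (cases "k \<in> ks p") (auto simp: lookup_single when_def in_keys_iff)
  then show ?thesis by (simp add: restr_def lookup_sum)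
qed

lemma restr_add: "restr X (p + q) = restr X p + restr X q"
  by (rule poly_mapping_eqI) (simp add: lookup_restr lookup_add)

lemma restr_zero[simp]: "restr X 0 = 0"
  by (rule poly_mapping_eqI) (simp add: lookup_restr)

lemma restr_minus: "restr X (p - q) = restr X p - restr X q"
  by (rule poly_mapping_eqI) (simp add: lookup_restr lookup_minus)

lemma restr_sum: "restr X (\<Sum>i\<in>A. f i) = (\<Sum>i\<in>A. restr X (f i))"
  by (induction A rule: infinite_finite_induct) (auto simp: restr_add)

lemma restr_sng: "restr X (sng k c) = (if ks k \<subseteq> X then sng k c else 0)"
  by (rule poly_mapping_eqI) (simp add: lookup_restr lookup_single when_def)

lemma restr_mult: "restr X (p * q) = restr X p * restr X q"
proof -
  have "restr X (p * q) = (\<Sum>m\<in>ks p. \<Sum>n\<in>ks q. restr X (sng (m+n) (lk p m * lk q n)))"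
    by (simp add: mult_expand[of p q] restr_sum)
  also have "\<dots> = (\<Sum>m\<in>ks p. \<Sum>n\<in>ks q. restr X (sng m (lk p m)) * restr X (sng n (lk q n)))"
    by (intro sum.cong refl) (simp add: restr_sng keys_add_nat mult_single)
  also have "\<dots> = restr X (\<Sum>m\<in>ks p. sng m (lk p m)) * restr X (\<Sum>n\<in>ks q. sng n (lk q n))"
    by (simp add: restr_sum sum_product)
  finally show ?thesis using expand[of p] expand[of q] by simp
qed

definition smul :: "complex \<Rightarrow> 'v mpoly \<Rightarrow> 'v mpoly" where
  "smul c p = sng 0 c * p"

lemma lookup_smul: "lk (smul c p) k = c * lk p k"
  by (simp add: smul_def flip: mult_map_scale_conv_mult) (simp add: map.rep_eq when_def)

lemma restr_smul: "restr X (smul c p) = smul c (restr X p)"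
  by (rule poly_mapping_eqI) (simp add: lookup_restr lookup_smul)

lemma Poly_iff: "p \<in> Poly X \<longleftrightarrow> (\<forall>m\<in>ks p. ks m \<subseteq> X)"
  by (simp add: Poly_def)

lemma restr_Poly: "restr X p \<in> Poly X"
  unfolding Poly_iff
proof
  fix m assume "m \<in> ks (restr X p)"
  then have "lk (restr X p) m \<noteq> 0" by (simp add: in_keys_iff)
  then show "ks m \<subseteq> X" by (simp add: lookup_restr split: if_splits)
qed

lemma restr_id: "p \<in> Poly X \<Longrightarrow> restr X p = p"
  by (rule poly_mapping_eqI) (auto simp: lookup_restr Poly_iff in_keys_iff)

lemma Poly_restr_iff: "p \<in> Poly X \<longleftrightarrow> restr X p = p"
  using restr_Poly restr_id by metis

lemma Poly_add: "p \<in> Poly X \<Longrightarrow> q \<in> Poly X \<Longrightarrow> p + q \<in> Poly X"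
  by (simp add: Poly_restr_iff restr_add)
lemma Poly_minus: "p \<in> Poly X \<Longrightarrow> q \<in> Poly X \<Longrightarrow> p - q \<in> Poly X"
  by (simp add: Poly_restr_iff restr_minus)
lemma Poly_mult: "p \<in> Poly X \<Longrightarrow> q \<in> Poly X \<Longrightarrow> p * q \<in> Poly X"
  by (simp add: Poly_restr_iff restr_mult)
lemma Poly_sng: "ks m \<subseteq> X \<Longrightarrow> sng m c \<in> Poly X"
  by (simp add: Poly_restr_iff restr_sng)
lemma Poly_const: "sng 0 c \<in> Poly X"
  by (simp add: Poly_sng)
lemma Poly_one: "1 \<in> Poly X"
  using Poly_const[of 1] by simp
lemma Poly_zero: "0 \<in> Poly X"
  using Poly_const[of 0] by simp
lemma Poly_smul: "p \<in> Poly X \<Longrightarrow> smul c p \<in> Poly X"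
  by (simp add: smul_def Poly_mult Poly_const)
lemma Poly_sum: "(\<And>i. i \<in> A \<Longrightarrow> f i \<in> Poly X) \<Longrightarrow> (\<Sum>i\<in>A. f i) \<in> Poly X"
  by (induction A rule: infinite_finite_induct) (auto simp: Poly_add Poly_zero)
lemma Poly_UNIV: "p \<in> Poly UNIV"
  by (simp add: Poly_iff)

section \<open>The action\<close>

definition lem :: "('v \<Rightarrow>\<^sub>0 nat) \<Rightarrow> ('v \<Rightarrow>\<^sub>0 nat) \<Rightarrow> bool" where
  "lem \<alpha> \<beta> \<longleftrightarrow> (\<forall>v. lk \<alpha> v \<le> lk \<beta> v)"

definition coef :: "('v \<Rightarrow>\<^sub>0 nat) \<Rightarrow> ('v \<Rightarrow>\<^sub>0 nat) \<Rightarrow> complex" where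
  "coef \<alpha> \<beta> = (\<Prod>v\<in>ks \<beta>. of_nat (fact (lk \<beta> v)) / of_nat (fact (lk \<beta> v - lk \<alpha> v)))"

definition mact :: "('v \<Rightarrow>\<^sub>0 nat) \<Rightarrow> ('v \<Rightarrow>\<^sub>0 nat) \<Rightarrow> complex \<Rightarrow> 'v mpoly" where
  "mact \<alpha> \<beta> c = (if lem \<alpha> \<beta> then sng (\<beta> - \<alpha>) (c * coef \<alpha> \<beta>) else 0)"

lemma act_mact: "act g F = (\<Sum>\<alpha>\<in>ks g. \<Sum>\<beta>\<in>ks F. mact \<alpha> \<beta> (lk g \<alpha> * lk F \<beta>))"
  unfolding act_def mact_def lem_def coef_def by (simp add: mult.assoc)

lemma mact_0[simp]: "mact \<alpha> \<beta> 0 = 0"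
  by (simp add: mact_def)

lemma mact_add: "mact \<alpha> \<beta> (x + y) = mact \<alpha> \<beta> x + mact \<alpha> \<beta> y"
  by (simp add: mact_def single_add distrib_right)

lemma smul_sng: "smul c (sng k y) = sng k (c * y)"
  by (simp add: smul_def mult_single)

lemma smul_sum: "smul c (\<Sum>i\<in>A. f i) = (\<Sum>i\<in>A. smul c (f i))"
  by (simp add: smul_def sum_distrib_left)

lemma smul_0[simp]: "smul c 0 = 0"
  by (simp add: smul_def)

lemma mact_mult: "mact \<alpha> \<beta> (c * x) = smul c (mact \<alpha> \<beta> x)"
  by (simp add: mact_def smul_sng mult.assoc)

lemma act_alt:
  assumes "finite A" "finite B" "ks g \<subseteq> A" "ks F \<subseteq> B"
  shows "act g F = (\<Sum>\<alpha>\<in>A. \<Sum>\<beta>\<in>B. mact \<alpha> \<beta> (lk g \<alpha> * lk F \<beta>))"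
proof -
  have "act g F = (\<Sum>\<alpha>\<in>ks g. \<Sum>\<beta>\<in>B. mact \<alpha> \<beta> (lk g \<alpha> * lk F \<beta>))"
    unfolding act_mact
    by (intro sum.cong refl sum.mono_neutral_left assms) (auto simp: in_keys_iff)
  also have "\<dots> = (\<Sum>\<alpha>\<in>A. \<Sum>\<beta>\<in>B. mact \<alpha> \<beta> (lk g \<alpha> * lk F \<beta>))"
    by (intro sum.mono_neutral_left assms) (auto simp: in_keys_iff)
  finally show ?thesis .
qed

lemma act_add_left: "act (g + h) F = act g F + act h F"
proof -
  let ?A = "ks g \<union> ks h"
  have "ks (g+h) \<subseteq> ?A" by (rule keys_add)
  then show ?thesis
    by (simp add: act_alt[of ?A "ks F"] lookup_add distrib_right mact_add sum.distrib)
qed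

lemma act_add_right: "act g (F + G) = act g F + act g G"
proof -
  let ?B = "ks F \<union> ks G"
  have "ks (F+G) \<subseteq> ?B" by (rule keys_add)
  then show ?thesis
    by (simp add: act_alt[of "ks g" ?B] lookup_add distrib_left mact_add sum.distrib)
qed

lemma act_zero_left[simp]: "act 0 F = 0"
  by (simp add: act_def)
lemma act_zero_right[simp]: "act g 0 = 0"
  by (simp add: act_def)

lemma act_sum_left: "act (\<Sum>i\<in>A. f i) F = (\<Sum>i\<in>A. act (f i) F)"
  by (induction A rule: infinite_finite_induct) (auto simp: act_add_left)
lemma act_sum_right: "act g (\<Sum>i\<in>A. f i) = (\<Sum>i\<in>A. act g (f i))"
  by (induction A rule: infinite_finite_induct) (auto simp: act_add_right)

lemma act_minus_left: "act (g - h) F = act g F - act h F"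
  using act_add_left[of "g - h" h F] by (simp add: algebra_simps)
lemma act_minus_right: "act g (F - G) = act g F - act g G"
  using act_add_right[of g "F - G" G] by (simp add: algebra_simps)

lemma keys_smul: "ks (smul c p) \<subseteq> ks p"
  by (auto simp: in_keys_iff lookup_smul)

lemma act_smul_left: "act (smul c g) F = smul c (act g F)"
  by (simp add: act_alt[of "ks g" "ks F", OF _ _ keys_smul] act_alt[of "ks g" "ks F" g]
      lookup_smul smul_sum mult.assoc mact_mult)

lemma keys_sng_sub: "ks (sng k c) \<subseteq> {k}"
  by simp

lemma act_sng_sng: "act (sng \<alpha> a) (sng \<beta> b) = mact \<alpha> \<beta> (a * b)"
  by (simp add: act_alt[of "{\<alpha>}" "{\<beta>}", OF _ _ keys_sng_sub keys_sng_sub])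

lemma coef_UNIV: "coef \<alpha> (\<beta>::('v::finite) \<Rightarrow>\<^sub>0 nat) =
    (\<Prod>v\<in>UNIV. of_nat (fact (lk \<beta> v)) / of_nat (fact (lk \<beta> v - lk \<alpha> v)))"
  unfolding coef_def by (intro prod.mono_neutral_left) (auto simp: in_keys_iff)

lemma coef_mult:
  assumes "lem (\<alpha> + \<gamma>) (\<beta>::('v::finite) \<Rightarrow>\<^sub>0 nat)"
  shows "coef \<gamma> \<beta> * coef \<alpha> (\<beta> - \<gamma>) = coef (\<alpha> + \<gamma>) \<beta>"
proof -
  have "\<And>v. (of_nat (fact (lk \<beta> v)) / of_nat (fact (lk \<beta> v - lk \<gamma> v))) *
      (of_nat (fact (lk \<beta> v - lk \<gamma> v)) / of_nat (fact (lk \<beta> v - lk \<gamma> v - lk \<alpha> v)) :: complex)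
     = of_nat (fact (lk \<beta> v)) / of_nat (fact (lk \<beta> v - (lk \<alpha> v + lk \<gamma> v)))"
  proof -
    fix v
    have "lk \<beta> v - lk \<gamma> v - lk \<alpha> v = lk \<beta> v - (lk \<alpha> v + lk \<gamma> v)" by simp
    moreover have "(of_nat (fact (lk \<beta> v - lk \<gamma> v)) :: complex) \<noteq> 0" by simp
    ultimately show "?thesis v" by (simp add: field_simps)
  qed
  then show ?thesis
    by (simp add: coef_UNIV lookup_minus_nat lookup_add flip: prod.distrib)
qed

lemma act_sng_mact: "act (sng \<alpha> a) (mact \<gamma> (\<beta>::('v::finite) \<Rightarrow>\<^sub>0 nat) x) = mact (\<alpha> + \<gamma>) \<beta> (a * x)"
proof (cases "lem \<gamma> \<beta>")
  case False
  then obtain v where "\<not> lk \<gamma> v \<le> lk \<beta> v" by (auto simp: lem_def)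
  then have "\<not> lem (\<alpha> + \<gamma>) \<beta>" unfolding lem_def lookup_add by (metis add_leE)
  with False show ?thesis by (simp add: mact_def)
next
  case True
  have e: "lem \<alpha> (\<beta> - \<gamma>) \<longleftrightarrow> lem (\<alpha> + \<gamma>) \<beta>"
    using True unfolding lem_def lookup_add lookup_minus_nat
    by (metis add.commute le_diff_conv2)
  have d: "\<beta> - \<gamma> - \<alpha> = \<beta> - (\<alpha> + \<gamma>)"
    by (rule poly_mapping_eqI) (simp add: lookup_minus_nat lookup_add)
  show ?thesis
    using True e
    by (auto simp: mact_def act_sng_sng d mult.assoc coef_mult[symmetric] mult.commute mult.left_commute)
qed

lemma act_sng_left_expand: "act (sng \<gamma> b) F = (\<Sum>\<beta>\<in>ks F. mact \<gamma> \<beta> (b * lk F \<beta>))"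
proof -
  have "act (sng \<gamma> b) F = act (sng \<gamma> b) (\<Sum>\<beta>\<in>ks F. sng \<beta> (lk F \<beta>))"
    using expand[of F] by simp
  then show ?thesis by (simp add: act_sum_right act_sng_sng)
qed

lemma act_sng_sng_comp: "act (sng \<alpha> a) (act (sng \<gamma> b) (F::('v::finite) mpoly)) = act (sng (\<alpha> + \<gamma>) (a * b)) F"
  by (simp add: act_sng_left_expand[of \<gamma>] act_sng_left_expand[of "\<alpha>+\<gamma>"] act_sum_right act_sng_mact mult.assoc)

lemma act_mult: "act (g * h) (F::('v::finite) mpoly) = act g (act h F)"
proof -
  have "act g (act h F) = act (\<Sum>\<alpha>\<in>ks g. sng \<alpha> (lk g \<alpha>)) (act (\<Sum>\<gamma>\<in>ks h. sng \<gamma> (lk h \<gamma>)) F)"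
    using expand[of g] expand[of h] by simp
  also have "\<dots> = (\<Sum>\<alpha>\<in>ks g. \<Sum>\<gamma>\<in>ks h. act (sng \<alpha> (lk g \<alpha>)) (act (sng \<gamma> (lk h \<gamma>)) F))"
    by (simp add: act_sum_left act_sum_right sum.swap[of _ "ks h"])
  also have "\<dots> = act (g * h) F"
    by (simp add: act_sng_sng_comp mult_expand[of g h] act_sum_left)
  finally show ?thesis by simp
qed

lemma act_comm: "act g (act h (F::('v::finite) mpoly)) = act h (act g F)"
  by (metis act_mult mult.commute)

section \<open>Supports and degrees\<close>

lemma keys_mact: "ks (mact \<alpha> \<beta> c) \<subseteq> (if lem \<alpha> \<beta> then {\<beta> - \<alpha>} else {})"
  by (simp add: mact_def)

lemma keys_act: "ks (act g F) \<subseteq> {\<beta> - \<alpha> | \<alpha> \<beta>. \<alpha> \<in> ks g \<and> \<beta> \<in> ks F \<and> lem \<alpha> \<beta>}"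
proof -
  have "ks (act g F) \<subseteq> (\<Union>\<alpha>\<in>ks g. \<Union>\<beta>\<in>ks F. ks (mact \<alpha> \<beta> (lk g \<alpha> * lk F \<beta>)))"
    unfolding act_mact
    by (rule order.trans[OF keys_sum], rule UN_mono[OF order_refl], rule keys_sum)
  also have "\<dots> \<subseteq> {\<beta> - \<alpha> | \<alpha> \<beta>. \<alpha> \<in> ks g \<and> \<beta> \<in> ks F \<and> lem \<alpha> \<beta>}"
    using keys_mact by (fastforce split: if_splits)
  finally show ?thesis .
qed

lemma lem_keys: "lem \<alpha> \<beta> \<Longrightarrow> ks \<alpha> \<subseteq> ks \<beta>"
proof
  fix x assume "lem \<alpha> \<beta>" "x \<in> ks \<alpha>"
  then have "lk \<alpha> x \<le> lk \<beta> x" "lk \<alpha> x \<noteq> 0" by (auto simp: lem_def in_keys_iff)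
  then show "x \<in> ks \<beta>" by (simp add: in_keys_iff)
qed

lemma keys_minus_nat: "ks ((\<beta>::'v \<Rightarrow>\<^sub>0 nat) - \<alpha>) \<subseteq> ks \<beta>"
proof
  fix x assume "x \<in> ks (\<beta> - \<alpha>)"
  then have "lk \<beta> x - lk \<alpha> x \<noteq> 0" by (simp add: in_keys_iff lookup_minus_nat)
  then show "x \<in> ks \<beta>" by (simp add: in_keys_iff)
qed

lemma act_Poly: "F \<in> Poly X \<Longrightarrow> act g F \<in> Poly X"
  unfolding Poly_iff
proof
  fix m assume F: "\<forall>m\<in>ks F. ks m \<subseteq> X" and "m \<in> ks (act g F)"
  then obtain \<alpha> \<beta> where "m = \<beta> - \<alpha>" "\<beta> \<in> ks F" using keys_act[of g F] by blast
  then show "ks m \<subseteq> X" using F keys_minus_nat[of \<beta> \<alpha>] by blast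
qed

lemma act_restr: "F \<in> Poly X \<Longrightarrow> act g F = act (restr X g) F"
proof -
  assume F: "F \<in> Poly X"
  have k: "ks (restr X g) \<subseteq> ks g" by (auto simp: in_keys_iff lookup_restr split: if_splits)
  have e1: "act (restr X g) F = (\<Sum>\<alpha>\<in>ks g. \<Sum>\<beta>\<in>ks F. mact \<alpha> \<beta> (lk (restr X g) \<alpha> * lk F \<beta>))"
    by (rule act_alt[OF _ _ k order_refl]) simp_all
  have e2: "act g F = (\<Sum>\<alpha>\<in>ks g. \<Sum>\<beta>\<in>ks F. mact \<alpha> \<beta> (lk g \<alpha> * lk F \<beta>))"
    by (rule act_mact)
  show ?thesis
    unfolding e1 e2
  proof (intro sum.cong refl)
    fix \<alpha> \<beta> assume "\<beta> \<in> ks F"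
    then have "ks \<beta> \<subseteq> X" using F by (auto simp: Poly_iff)
    show "mact \<alpha> \<beta> (lk g \<alpha> * lk F \<beta>) = mact \<alpha> \<beta> (lk (restr X g) \<alpha> * lk F \<beta>)"
    proof (cases "lem \<alpha> \<beta>")
      case True
      then have "ks \<alpha> \<subseteq> X" using lem_keys[of \<alpha> \<beta>] \<open>ks \<beta> \<subseteq> X\<close> by blast
      then show ?thesis by (simp add: lookup_restr)
    qed (simp add: mact_def)
  qed
qed

lemma total_deg_UNIV: "total_deg (m::('v::finite) \<Rightarrow>\<^sub>0 nat) = (\<Sum>v\<in>UNIV. lk m v)"
  unfolding total_deg_def by (intro sum.mono_neutral_left) (auto simp: in_keys_iff)

lemma total_deg_add: "total_deg ((m::('v::finite) \<Rightarrow>\<^sub>0 nat) + n) = total_deg m + total_deg n"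
  by (simp add: total_deg_UNIV lookup_add sum.distrib)

lemma total_deg_minus: "lem \<alpha> \<beta> \<Longrightarrow> total_deg ((\<beta>::('v::finite) \<Rightarrow>\<^sub>0 nat) - \<alpha>) = total_deg \<beta> - total_deg \<alpha>"
proof -
  assume l: "lem \<alpha> \<beta>"
  have "\<beta> = (\<beta> - \<alpha>) + \<alpha>"
  proof (rule poly_mapping_eqI)
    fix v
    have "lk \<alpha> v \<le> lk \<beta> v" using l by (simp add: lem_def)
    then show "lk \<beta> v = lk ((\<beta> - \<alpha>) + \<alpha>) v" by (simp add: lookup_add lookup_minus_nat)
  qed
  then have "total_deg \<beta> = total_deg (\<beta> - \<alpha>) + total_deg \<alpha>"
    by (metis total_deg_add)
  then show ?thesis by simp
qed

lemma total_deg_mono: "lem \<alpha> \<beta> \<Longrightarrow> total_deg (\<alpha>::('v::finite) \<Rightarrow>\<^sub>0 nat) \<le> total_deg \<beta>"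
  unfolding total_deg_UNIV lem_def by (simp add: sum_mono)

lemma total_deg_0_iff: "total_deg (m::('v::finite) \<Rightarrow>\<^sub>0 nat) = 0 \<longleftrightarrow> m = 0"
proof
  assume "total_deg m = 0"
  then have "\<forall>v. lk m v = 0" unfolding total_deg_UNIV by simp
  then show "m = 0" by (intro poly_mapping_eqI) simp
next
  assume "m = 0"
  then show "total_deg m = 0" by (simp add: total_deg_def)
qed

lemma lem_eq: "lem \<alpha> \<beta> \<Longrightarrow> total_deg (\<alpha>::('v::finite) \<Rightarrow>\<^sub>0 nat) = total_deg \<beta> \<Longrightarrow> \<alpha> = \<beta>"
proof -
  assume l: "lem \<alpha> \<beta>" and e: "total_deg \<alpha> = total_deg \<beta>"
  then have "total_deg (\<beta> - \<alpha>) = 0" by (simp add: total_deg_minus)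
  then have z: "\<beta> - \<alpha> = 0" by (simp add: total_deg_0_iff)
  show "\<alpha> = \<beta>"
  proof (rule poly_mapping_eqI)
    fix v
    have "lk \<beta> v - lk \<alpha> v = 0" using z by (metis lookup_minus_nat lookup_zero)
    moreover have "lk \<alpha> v \<le> lk \<beta> v" using l by (simp add: lem_def)
    ultimately show "lk \<alpha> v = lk \<beta> v" by simp
  qed
qed

lemma Hom_iff: "p \<in> Hom X d \<longleftrightarrow> p \<in> Poly X \<and> (\<forall>m\<in>ks p. total_deg m = d)"
  by (simp add: Hom_def)

lemma act_hom_keys:
  assumes "\<forall>\<alpha>\<in>ks g. total_deg \<alpha> = k" "\<forall>\<beta>\<in>ks F. total_deg \<beta> = d"
  shows "\<forall>\<gamma>\<in>ks (act g (F::('v::finite) mpoly)). total_deg \<gamma> = d - k"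
  using keys_act[of g F] assms total_deg_minus by fastforce

lemma act_hom: "g \<in> Hom Y k \<Longrightarrow> F \<in> Hom X d \<Longrightarrow> act g (F::('v::finite) mpoly) \<in> Hom X (d - k)"
  using act_hom_keys[of g k F d] act_Poly[of F X g] by (auto simp: Hom_iff)

lemma act_high:
  assumes "\<forall>\<alpha>\<in>ks g. total_deg \<alpha> > d" "\<forall>\<beta>\<in>ks F. total_deg \<beta> = d"
  shows "act g (F::('v::finite) mpoly) = 0"
  unfolding act_mact
proof (intro sum.neutral ballI)
  fix \<alpha> \<beta> assume "\<alpha> \<in> ks g" "\<beta> \<in> ks F"
  then have "\<not> lem \<alpha> \<beta>" using assms total_deg_mono by fastforce
  then show "mact \<alpha> \<beta> (lk g \<alpha> * lk F \<beta>) = 0" by (simp add: mact_def)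
qed

lemma coef_self_nz: "coef \<beta> \<beta> \<noteq> 0"
  by (simp add: coef_def)

lemma exists_inv:
  assumes "G \<in> Hom X k" "G \<noteq> (0::('v::finite) mpoly)"
  shows "\<exists>\<beta>0 c. ks \<beta>0 \<subseteq> X \<and> total_deg \<beta>0 = k \<and> act (sng \<beta>0 c) G = 1"
proof -
  obtain \<beta>0 where b: "\<beta>0 \<in> ks G" using assms(2) by fastforce
  have kX: "ks \<beta>0 \<subseteq> X" and td: "total_deg \<beta>0 = k" using assms(1) b by (auto simp: Hom_iff Poly_iff)
  define c where "c = 1 / (lk G \<beta>0 * coef \<beta>0 \<beta>0)"
  have "act (sng \<beta>0 c) G = (\<Sum>\<beta>\<in>ks G. mact \<beta>0 \<beta> (c * lk G \<beta>))"
    by (rule act_sng_left_expand)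
  also have "\<dots> = (\<Sum>\<beta>\<in>{\<beta>0}. mact \<beta>0 \<beta> (c * lk G \<beta>))"
  proof (rule sum.mono_neutral_right)
    show "\<forall>\<beta>\<in>ks G - {\<beta>0}. mact \<beta>0 \<beta> (c * lk G \<beta>) = 0"
    proof
      fix \<beta> assume "\<beta> \<in> ks G - {\<beta>0}"
      then have "\<not> lem \<beta>0 \<beta>" using lem_eq[of \<beta>0 \<beta>] assms(1) td b by (auto simp: Hom_iff)
      then show "mact \<beta>0 \<beta> (c * lk G \<beta>) = 0" by (simp add: mact_def)
    qed
  qed (use b in auto)
  also have "\<dots> = 1"
    using b coef_self_nz[of \<beta>0] by (simp add: mact_def lem_def c_def in_keys_iff)
  finally show ?thesis using kX td by blast
qed

section \<open>Ideals\<close>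

lemma ideal_gen_iff: "p \<in> ideal_gen X G \<longleftrightarrow> (\<exists>A f. finite A \<and> A \<subseteq> G \<and> (\<forall>a\<in>A. f a \<in> Poly X) \<and> p = (\<Sum>a\<in>A. f a * a))"
  by (simp add: ideal_gen_def)

lemma ideal_gen_zero: "0 \<in> ideal_gen X G"
  unfolding ideal_gen_iff by (rule exI[of _ "{}"]) simp

lemma ideal_gen_add:
  assumes "p \<in> ideal_gen X G" "q \<in> ideal_gen X G"
  shows "p + q \<in> ideal_gen X G"
proof -
  obtain A f where A: "finite A" "A \<subseteq> G" "\<forall>a\<in>A. f a \<in> Poly X" "p = (\<Sum>a\<in>A. f a * a)"
    using assms(1) by (auto simp: ideal_gen_iff)
  obtain B f' where B: "finite B" "B \<subseteq> G" "\<forall>a\<in>B. f' a \<in> Poly X" "q = (\<Sum>a\<in>B. f' a * a)"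
    using assms(2) by (auto simp: ideal_gen_iff)
  define h where "h a = (if a \<in> A then f a else 0) + (if a \<in> B then f' a else 0)" for a
  have "(\<Sum>a\<in>A \<union> B. h a * a) = (\<Sum>a\<in>A \<union> B. (if a \<in> A then f a * a else 0)) + (\<Sum>a\<in>A \<union> B. (if a \<in> B then f' a * a else 0))"
  proof -
    have "\<And>a. h a * a = (if a \<in> A then f a * a else 0) + (if a \<in> B then f' a * a else 0)"
      by (simp add: h_def distrib_right)
    then show ?thesis by (simp add: sum.distrib)
  qed
  also have "\<dots> = p + q"
    using A B by (simp add: sum.If_cases Int_absorb1 Int_absorb2)
  finally have "p + q = (\<Sum>a\<in>A \<union> B. h a * a)" by simp
  moreover have "\<forall>a\<in>A \<union> B. h a \<in> Poly X"
    using A B by (auto simp: h_def intro!: Poly_add Poly_zero)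
  ultimately show ?thesis using A B unfolding ideal_gen_iff
    by (intro exI[of _ "A \<union> B"] exI[of _ h]) auto
qed

lemma ideal_gen_mult:
  assumes "h \<in> Poly X" "p \<in> ideal_gen X G"
  shows "h * p \<in> ideal_gen X G"
proof -
  obtain A f where A: "finite A" "A \<subseteq> G" "\<forall>a\<in>A. f a \<in> Poly X" "p = (\<Sum>a\<in>A. f a * a)"
    using assms(2) by (auto simp: ideal_gen_iff)
  have "h * p = (\<Sum>a\<in>A. (h * f a) * a)" using A by (simp add: sum_distrib_left mult.assoc)
  then show ?thesis using A assms(1) unfolding ideal_gen_iff
    by (intro exI[of _ A] exI[of _ "\<lambda>a. h * f a"]) (auto intro: Poly_mult)
qed

lemma ideal_gen_gen: "g \<in> G \<Longrightarrow> g \<in> ideal_gen X G"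
  unfolding ideal_gen_iff
  by (intro exI[of _ "{g}"] exI[of _ "\<lambda>_. 1"]) (auto intro: Poly_one)

lemma ideal_gen_sum: "(\<And>i. i \<in> I \<Longrightarrow> f i \<in> ideal_gen X G) \<Longrightarrow> (\<Sum>i\<in>I. f i) \<in> ideal_gen X G"
  by (induction I rule: infinite_finite_induct) (auto intro: ideal_gen_add ideal_gen_zero)

lemma ideal_gen_smul: "p \<in> ideal_gen X G \<Longrightarrow> smul c p \<in> ideal_gen X G"
  unfolding smul_def by (rule ideal_gen_mult[OF Poly_const])

lemma smul_minus1: "smul (-1) p = - p"
  by (simp add: smul_def single_uminus)

lemma ideal_gen_uminus: "p \<in> ideal_gen X G \<Longrightarrow> - p \<in> ideal_gen X G"
  using ideal_gen_smul[of p X G "-1"] by (simp add: smul_minus1)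

lemma ideal_gen_diff: "p \<in> ideal_gen X G \<Longrightarrow> q \<in> ideal_gen X G \<Longrightarrow> p - q \<in> ideal_gen X G"
proof -
  assume "p \<in> ideal_gen X G" "q \<in> ideal_gen X G"
  then have "p + - q \<in> ideal_gen X G" by (intro ideal_gen_add ideal_gen_uminus)
  then show ?thesis by simp
qed

lemma Poly_mono: "X \<subseteq> X' \<Longrightarrow> Poly X \<subseteq> Poly X'"
  unfolding Poly_def by blast

lemma ideal_gen_mono: "X \<subseteq> X' \<Longrightarrow> G \<subseteq> G' \<Longrightarrow> ideal_gen X G \<subseteq> ideal_gen X' G'"
proof
  fix p assume X: "X \<subseteq> X'" and G: "G \<subseteq> G'" and "p \<in> ideal_gen X G"
  then obtain A f where A: "finite A" "A \<subseteq> G" "\<forall>a\<in>A. f a \<in> Poly X" "p = (\<Sum>a\<in>A. f a * a)"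
    by (auto simp: ideal_gen_iff)
  have "\<forall>a\<in>A. f a \<in> Poly X'" using A(3) Poly_mono[OF X] by blast
  then show "p \<in> ideal_gen X' G'" using A G unfolding ideal_gen_iff
    by (intro exI[of _ A] exI[of _ f]) blast
qed

lemma ideal_gen_Poly: "G \<subseteq> Poly X \<Longrightarrow> ideal_gen X G \<subseteq> Poly X"
proof
  fix p assume G: "G \<subseteq> Poly X" and "p \<in> ideal_gen X G"
  then obtain A f where A: "finite A" "A \<subseteq> G" "\<forall>a\<in>A. f a \<in> Poly X" "p = (\<Sum>a\<in>A. f a * a)"
    by (auto simp: ideal_gen_iff)
  show "p \<in> Poly X" unfolding A(4)
  proof (rule Poly_sum)
    fix a assume "a \<in> A"
    then show "f a * a \<in> Poly X" using A G by (intro Poly_mult) auto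
  qed
qed

lemma restr_empty: "restr {} p = sng 0 (lk p 0)"
  by (rule poly_mapping_eqI) (auto simp: lookup_restr lookup_single when_def)

lemma lookup_mult_0: "lk (p * q) 0 = lk p 0 * lk (q::'v mpoly) 0"
proof -
  have "sng (0::'v \<Rightarrow>\<^sub>0 nat) (lk (p * q) 0) = sng 0 (lk p 0 * lk q 0)"
    using restr_mult[of "{}" p q] by (simp add: restr_empty mult_single)
  then show ?thesis by (metis lookup_single_eq)
qed

lemma ideal_const:
  assumes "\<forall>a\<in>G. lk a 0 = 0" "p \<in> ideal_gen X G"
  shows "lk p 0 = 0"
proof -
  obtain A f where A: "finite A" "A \<subseteq> G" "p = (\<Sum>a\<in>A. f a * a)"
    using assms(2) by (auto simp: ideal_gen_iff)
  then show ?thesis using assms(1) by (auto simp: lookup_sum lookup_mult_0 intro!: sum.neutral)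
qed

lemma act_const: "act (sng 0 c) F = smul c F"
proof -
  have "act (sng 0 c) F = (\<Sum>\<beta>\<in>ks F. sng \<beta> (c * lk F \<beta>))"
    by (simp add: act_sng_left_expand mact_def lem_def coef_def)
  also have "\<dots> = smul c F"
    by (subst (2) expand) (simp add: smul_sum smul_sng)
  finally show ?thesis .
qed

lemma perp_const:
  assumes F: "F \<in> Hom X d" "F \<noteq> (0::('v::finite) mpoly)" and g: "act g F = 0"
  shows "lk g 0 = 0"
proof -
  obtain \<beta> where b: "\<beta> \<in> ks F" using F(2) by fastforce
  have tb: "total_deg \<beta> = d" using F(1) b by (simp add: Hom_iff)
  define g' where "g' = g - sng 0 (lk g 0)"
  have g'0: "lk g' 0 = 0" by (simp add: g'_def lookup_minus)
  have "\<beta> \<notin> ks (act g' F)"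
  proof
    assume "\<beta> \<in> ks (act g' F)"
    then obtain \<alpha> \<beta>' where ab: "\<beta> = \<beta>' - \<alpha>" "\<alpha> \<in> ks g'" "\<beta>' \<in> ks F" "lem \<alpha> \<beta>'"
      using keys_act[of g' F] by blast
    have "\<alpha> \<noteq> 0" using ab(2) g'0 by (auto simp: in_keys_iff)
    then have "total_deg \<alpha> > 0" using total_deg_0_iff by blast
    moreover have "total_deg \<beta>' = d" using F(1) ab(3) by (simp add: Hom_iff)
    moreover have "total_deg \<alpha> \<le> total_deg \<beta>'" using ab(4) by (rule total_deg_mono)
    ultimately have "total_deg \<beta> < d" using ab(1) total_deg_minus[OF ab(4)] by simp
    then show False using tb by simp
  qed
  then have z: "lk (act g' F) \<beta> = 0" by (simp add: in_keys_iff)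
  have "g = sng 0 (lk g 0) + g'" by (simp add: g'_def)
  then have "act g F = smul (lk g 0) F + act g' F" by (metis act_add_left act_const)
  then have "lk (act g F) \<beta> = lk g 0 * lk F \<beta>" using z by (simp add: lookup_add lookup_smul)
  then show ?thesis using g b by (simp add: in_keys_iff)
qed

lemma rest_in_ideal:
  assumes "X \<union> Y = UNIV"
  shows "p - restr X p \<in> ideal_gen UNIV (LinForms Y)"
proof -
  have e: "p - restr X p = (\<Sum>m\<in>{m\<in>ks p. \<not> ks m \<subseteq> X}. sng m (lk p m))"
  proof (rule poly_mapping_eqI)
    fix k
    have "(\<Sum>m\<in>{m\<in>ks p. \<not> ks m \<subseteq> X}. lk (sng m (lk p m)) k) = (if ks k \<subseteq> X then 0 else lk p k)"
      by (cases "k \<in> ks p") (auto simp: lookup_single when_def in_keys_iff)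
    then show "lk (p - restr X p) k = lk (\<Sum>m\<in>{m\<in>ks p. \<not> ks m \<subseteq> X}. sng m (lk p m)) k"
      by (simp add: lookup_sum lookup_minus lookup_restr)
  qed
  have "sng m c \<in> ideal_gen UNIV (LinForms Y)" if nm: "\<not> ks m \<subseteq> X" for m c
  proof -
    obtain v where v: "v \<in> ks m" "v \<notin> X" using nm by blast
    then have vY: "v \<in> Y" using assms by blast
    define e where "e = (sng v 1 :: 'a \<Rightarrow>\<^sub>0 nat)"
    have "m - e + e = m"
    proof (rule poly_mapping_eqI)
      fix w
      show "lk (m - e + e) w = lk m w"
        using v(1) by (cases "w = v") (auto simp: e_def lookup_add lookup_minus_nat lookup_single in_keys_iff)
    qed
    then have "sng m c = sng (m - e) c * sng e 1" by (simp add: mult_single)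
    moreover have "sng e (1::complex) \<in> LinForms Y"
      using vY by (auto simp: LinForms_def Hom_iff Poly_iff e_def total_deg_def)
    ultimately show ?thesis
      by (metis ideal_gen_gen ideal_gen_mult Poly_UNIV)
  qed
  then show ?thesis unfolding e by (intro ideal_gen_sum) auto
qed

lemma restr_Hom_other:
  assumes "X \<inter> Y = {}" "p \<in> Hom Y k" "k \<ge> 1"
  shows "restr X (p::('v::finite) mpoly) = 0"
proof (rule poly_mapping_eqI)
  fix m
  show "lk (restr X p) m = lk 0 m"
  proof (cases "m \<in> ks p")
    case True
    then have "ks m \<subseteq> Y" "total_deg m = k" using assms(2) by (auto simp: Hom_iff Poly_iff)
    then have "m \<noteq> 0" "ks m \<subseteq> Y" using assms(3) by (auto simp: total_deg_def)
    then have "\<not> ks m \<subseteq> X" using assms(1) by (metis keys_eq_empty Int_absorb1 inf_mono subset_empty order_refl)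
    then show ?thesis by (simp add: lookup_restr)
  qed (simp add: lookup_restr in_keys_iff)
qed

lemma restr_Poly_other:
  assumes "X \<inter> Y = {}" "p \<in> Poly Y"
  shows "restr X p = sng 0 (lk p 0)"
proof (rule poly_mapping_eqI)
  fix m
  show "lk (restr X p) m = lk (sng 0 (lk p 0)) m"
  proof (cases "m \<in> ks p")
    case True
    then have "ks m \<subseteq> Y" using assms(2) by (auto simp: Poly_iff)
    have "ks m \<subseteq> X \<longleftrightarrow> m = 0"
    proof
      assume "ks m \<subseteq> X"
      then have "ks m = {}" using \<open>ks m \<subseteq> Y\<close> assms(1) by blast
      then show "m = 0" by simp
    qed simp
    then show ?thesis by (auto simp: lookup_restr lookup_single when_def)
  qed (auto simp: lookup_restr lookup_single when_def in_keys_iff)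
qed

lemma inv_lemma:
  assumes XY: "X \<inter> Y = {}" and d: "d \<ge> 2" and F: "F \<in> Hom X d" and l: "l \<in> LinForms X"
    and n: "act l F \<noteq> (0::('v::finite) mpoly)"
  shows "\<exists>h. h \<in> Poly X \<and> restr Y h = 0 \<and> act (h * l) F = 1"
proof -
  have "act l F \<in> Hom X (d - 1)" using act_hom[of l X 1 F X d] F l by (simp add: LinForms_def)
  then obtain \<beta>0 c where b: "ks \<beta>0 \<subseteq> X" "total_deg \<beta>0 = d - 1" "act (sng \<beta>0 c) (act l F) = 1"
    using exists_inv n by blast
  have "sng \<beta>0 c \<in> Hom X (d - 1)"
    using b by (auto simp: Hom_iff Poly_iff)
  then have "restr Y (sng \<beta>0 c) = 0"
    using restr_Hom_other[of Y X "sng \<beta>0 c" "d - 1"] XY d by (simp add: Int_commute)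
  moreover have "sng \<beta>0 c \<in> Poly X" using b by (simp add: Poly_sng)
  ultimately show ?thesis using b(3) by (metis act_mult)
qed

context
  fixes X Y :: "('v::finite) set" and F1 F2 l1 l2 :: "'v mpoly" and d :: nat
  assumes XY: "X \<inter> Y = {}" "X \<union> Y = UNIV" and d2: "d \<ge> 2"
    and F1: "F1 \<in> Hom X d" and F2: "F2 \<in> Hom Y d"
    and l1: "l1 \<in> LinForms X" and l2: "l2 \<in> LinForms Y"
    and n1: "act l1 F1 \<noteq> 0" and n2: "act l2 F2 \<noteq> 0"
begin

lemma YX: "Y \<inter> X = {}" using XY by blast

lemma F1P: "F1 \<in> Poly X" using F1 by (simp add: Hom_iff)
lemma F2P: "F2 \<in> Poly Y" using F2 by (simp add: Hom_iff)
lemma l1P: "l1 \<in> Poly X" using l1 by (simp add: LinForms_def Hom_iff)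
lemma l2P: "l2 \<in> Poly Y" using l2 by (simp add: LinForms_def Hom_iff)

lemma restr_l2: "restr X l2 = 0"
  using restr_Hom_other[OF XY(1), of l2 1] l2 by (simp add: LinForms_def)
lemma restr_l1: "restr Y l1 = 0"
  using restr_Hom_other[OF YX, of l1 1] l1 by (simp add: LinForms_def)

lemma perp_restr:
  assumes g: "act g (F1 + F2) = 0"
  shows "restr X g \<in> ideal_gen X (perp X F1 \<union> {l1})"
proof -
  obtain h1 where h1: "h1 \<in> Poly X" "restr Y h1 = 0" "act (h1 * l1) F1 = 1"
    using inv_lemma[OF XY(1) d2 F1 l1 n1] by blast
  define P where "P = act (restr X g) F1"
  have PX: "P \<in> Poly X" unfolding P_def by (rule act_Poly[OF F1P])
  have "act g F1 + act g F2 = 0" using g by (simp add: act_add_right)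
  then have "P = - act g F2" unfolding P_def using act_restr[OF F1P, of g] by (simp add: eq_neg_iff_add_eq_0)
  moreover have "act g F2 \<in> Poly Y" by (rule act_Poly[OF F2P])
  ultimately have PY: "P \<in> Poly Y" using Poly_minus[OF Poly_zero, of "act g F2" Y] by simp
  define c where "c = lk P 0"
  have Pc: "P = sng 0 c"
    using restr_Poly_other[OF XY(1) PY] restr_id[OF PX] by (simp add: c_def)
  define q where "q = restr X g - smul c (h1 * l1)"
  have "act q F1 = P - smul c (act (h1 * l1) F1)"
    by (simp add: q_def act_minus_left act_smul_left P_def)
  also have "\<dots> = 0" using h1(3) Pc by (simp add: smul_def)
  finally have "act q F1 = 0" .
  moreover have "q \<in> Poly X" unfolding q_def
    by (intro Poly_minus restr_Poly Poly_smul Poly_mult h1(1) l1P)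
  ultimately have qp: "q \<in> perp X F1" by (simp add: perp_def)
  have "restr X g = q + smul c h1 * l1" by (simp add: q_def smul_def mult.assoc)
  moreover have "q \<in> ideal_gen X (perp X F1 \<union> {l1})" using qp by (intro ideal_gen_gen) auto
  moreover have "smul c h1 * l1 \<in> ideal_gen X (perp X F1 \<union> {l1})"
    by (intro ideal_gen_mult Poly_smul h1(1) ideal_gen_gen) auto
  ultimately show ?thesis by (metis ideal_gen_add)
qed

lemma K:
  assumes "p \<in> ideal_gen UNIV (perp UNIV (F1 + F2) \<union> {l1 + l2})"
  shows "restr X p \<in> ideal_gen X (perp X F1 \<union> {l1})"
proof -
  obtain A f where A: "finite A" "A \<subseteq> perp UNIV (F1 + F2) \<union> {l1 + l2}" "p = (\<Sum>a\<in>A. f a * a)"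
    using assms by (auto simp: ideal_gen_iff)
  have "restr X p = (\<Sum>a\<in>A. restr X (f a) * restr X a)" by (simp add: A(3) restr_sum restr_mult)
  also have "\<dots> \<in> ideal_gen X (perp X F1 \<union> {l1})"
  proof (rule ideal_gen_sum, rule ideal_gen_mult[OF restr_Poly])
    fix a assume "a \<in> A"
    then have "a \<in> perp UNIV (F1 + F2) \<or> a = l1 + l2" using A(2) by blast
    then show "restr X a \<in> ideal_gen X (perp X F1 \<union> {l1})"
    proof
      assume "a \<in> perp UNIV (F1 + F2)"
      then show ?thesis using perp_restr by (simp add: perp_def)
    next
      assume "a = l1 + l2"
      then have "restr X a = l1" by (simp add: restr_add restr_l2 restr_id[OF l1P])
      then show ?thesis by (simp add: ideal_gen_gen)
    qed
  qed
  finally show ?thesis .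
qed

lemma incl:
  assumes "p \<in> ideal_gen UNIV (perp UNIV (F1 + F2) \<union> {l1 + l2})"
  shows "p \<in> ideal_gen UNIV (perp X F1 \<union> {l1} \<union> LinForms Y)"
proof -
  have "restr X p \<in> ideal_gen UNIV (perp X F1 \<union> {l1} \<union> LinForms Y)"
    using K[OF assms] ideal_gen_mono[of X UNIV "perp X F1 \<union> {l1}" "perp X F1 \<union> {l1} \<union> LinForms Y"] by blast
  moreover have "p - restr X p \<in> ideal_gen UNIV (perp X F1 \<union> {l1} \<union> LinForms Y)"
    using rest_in_ideal[OF XY(2), of p] ideal_gen_mono[of UNIV UNIV "LinForms Y" "perp X F1 \<union> {l1} \<union> LinForms Y"]
    by blast
  ultimately have "restr X p + (p - restr X p) \<in> ideal_gen UNIV (perp X F1 \<union> {l1} \<union> LinForms Y)"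
    by (rule ideal_gen_add)
  then show ?thesis by simp
qed

lemma l1_notin:
  "l1 \<notin> ideal_gen UNIV (perp UNIV (F1 + F2) \<union> {l1 + l2})"
proof
  assume l1I: "l1 \<in> ideal_gen UNIV (perp UNIV (F1 + F2) \<union> {l1 + l2})"
  obtain h1 where h1: "h1 \<in> Poly X" "restr Y h1 = 0" "act (h1 * l1) F1 = 1"
    using inv_lemma[OF XY(1) d2 F1 l1 n1] by blast
  obtain h2 where h2: "h2 \<in> Poly Y" "restr X h2 = 0" "act (h2 * l2) F2 = 1"
    using inv_lemma[OF YX d2 F2 l2 n2] by blast
  define H where "H = act h1 F1 - act h2 F2"
  have a12: "act h1 F2 = 0" using act_restr[OF F2P, of h1] h1(2) by simp
  have a21: "act h2 F1 = 0" using act_restr[OF F1P, of h2] h2(2) by simp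
  have HF: "H = act (h1 - h2) (F1 + F2)"
    by (simp add: H_def act_minus_left act_add_right a12 a21)
  have x1: "act l1 (act h2 F2) = 0"
    using act_restr[OF F2P, of "l1 * h2"] by (simp add: restr_mult restr_l1 act_mult)
  have x2: "act l2 (act h1 F1) = 0"
    using act_restr[OF F1P, of "l2 * h1"] by (simp add: restr_mult restr_l2 act_mult)
  have y1: "act l1 (act h1 F1) = 1" using h1(3) by (simp add: act_mult[symmetric] mult.commute)
  have y2: "act l2 (act h2 F2) = 1" using h2(3) by (simp add: act_mult[symmetric] mult.commute)
  have l1H: "act l1 H = 1" by (simp add: H_def act_minus_right x1 y1)
  have lH: "act (l1 + l2) H = 0" by (simp add: H_def act_minus_right act_add_left x1 x2 y1 y2)
  obtain A f where A: "finite A" "A \<subseteq> perp UNIV (F1 + F2) \<union> {l1 + l2}" "l1 = (\<Sum>a\<in>A. f a * a)"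
    using l1I by (auto simp: ideal_gen_iff)
  have "act l1 H = (\<Sum>a\<in>A. act (f a * a) H)" by (simp add: A(3) act_sum_left)
  also have "\<dots> = 0"
  proof (rule sum.neutral, rule ballI)
    fix a assume "a \<in> A"
    then have "a \<in> perp UNIV (F1 + F2) \<or> a = l1 + l2" using A(2) by blast
    then show "act (f a * a) H = 0"
    proof
      assume "a \<in> perp UNIV (F1 + F2)"
      then have "act a (F1 + F2) = 0" by (simp add: perp_def)
      then show ?thesis unfolding HF
        by (metis act_mult act_zero_right mult.commute mult.left_commute)
    next
      assume "a = l1 + l2"
      then show ?thesis by (simp add: act_mult lH)
    qed
  qed
  finally show False using l1H by simp
qed

end


section \<open>Linear algebra\<close>

lemma smul_vs: "vector_space (smul :: complex \<Rightarrow> 'v mpoly \<Rightarrow> 'v mpoly)"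
  by unfold_locales (simp_all add: smul_def distrib_left single_add distrib_right mult_single flip: mult.assoc)

interpretation V: vector_space "smul :: complex \<Rightarrow> 'v mpoly \<Rightarrow> 'v mpoly"
  by (rule smul_vs)

lemma cspan_eq: "finite S \<Longrightarrow> cspan S = V.span S"
  by (simp add: cspan_def V.span_finite smul_def image_def)

definition M :: "'v mpoly set \<Rightarrow> 'v mpoly set \<Rightarrow> 'v mpoly set" where
  "M I S = {s + i | s i. s \<in> V.span S \<and> i \<in> I}"

definition indep_mod :: "'v mpoly set \<Rightarrow> 'v mpoly set \<Rightarrow> bool" where
  "indep_mod I E \<longleftrightarrow> (\<forall>c. (\<Sum>e\<in>E. smul (c e) e) \<in> I \<longrightarrow> (\<forall>e\<in>E. c e = 0))"

lemma spans_mod_M: "spans_mod R I S \<longleftrightarrow> finite S \<and> S \<subseteq> R \<and> R \<subseteq> M I S"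
  unfolding spans_mod_def M_def by (auto simp: cspan_eq)

lemma M_subspace: "V.subspace I \<Longrightarrow> V.subspace (M I S)"
  unfolding M_def by (rule V.subspace_sums) auto

lemma span_M: "V.subspace I \<Longrightarrow> V.span S \<subseteq> M I S"
  unfolding M_def using V.subspace_0 by force

lemma I_M: "V.subspace I \<Longrightarrow> I \<subseteq> M I S"
  unfolding M_def using V.span_zero by force

lemma M_mono: assumes "V.subspace I" "S \<subseteq> M I T" shows "M I S \<subseteq> M I T"
proof
  fix x assume "x \<in> M I S"
  then obtain s i where x: "x = s + i" "s \<in> V.span S" "i \<in> I" by (auto simp: M_def)
  have "V.span S \<subseteq> M I T" using assms by (intro V.span_minimal M_subspace)
  then have "s \<in> M I T" using x by blast
  moreover have "i \<in> M I T" using x I_M[OF assms(1)] by blast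
  ultimately show "x \<in> M I T" using x M_subspace[OF assms(1)] V.subspace_add by blast
qed

lemma indep_mod_subset:
  assumes "indep_mod I S" "T \<subseteq> S" "finite S"
  shows "indep_mod I T"
  unfolding indep_mod_def
proof (intro allI impI)
  fix c assume "(\<Sum>e\<in>T. smul (c e) e) \<in> I"
  define c' where "c' e = (if e \<in> T then c e else 0)" for e
  have "(\<Sum>e\<in>S. smul (c' e) e) = (\<Sum>e\<in>T. smul (c e) e)"
  proof -
    have "(\<Sum>e\<in>S. smul (c' e) e) = (\<Sum>e\<in>S. if e \<in> T then smul (c e) e else 0)"
      by (intro sum.cong) (auto simp: c'_def smul_def)
    also have "\<dots> = (\<Sum>e\<in>T. smul (c e) e)"
      using assms(2,3) by (simp add: sum.If_cases Int_absorb1)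
    finally show ?thesis .
  qed
  then have "\<forall>e\<in>S. c' e = 0" using assms(1) \<open>_ \<in> I\<close> unfolding indep_mod_def by metis
  then show "\<forall>e\<in>T. c e = 0" using assms(2) unfolding c'_def by (metis subsetD)
qed


lemma indep_mod_notin:
  assumes "indep_mod I S" "finite S" "a \<in> S"
  shows "a \<notin> I"
proof
  assume "a \<in> I"
  have "indep_mod I {a}" using indep_mod_subset[OF assms(1) _ assms(2)] assms(3) by blast
  then have "(\<Sum>e\<in>{a}. smul ((\<lambda>_. 1) e) e) \<in> I \<longrightarrow> (\<forall>e\<in>{a}. (\<lambda>_. 1) e = (0::complex))"
    unfolding indep_mod_def by (rule spec)
  moreover have "(\<Sum>e\<in>{a}. smul ((\<lambda>_. 1) e) e) = a" by (simp add: smul_def)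
  ultimately have "\<forall>e\<in>{a}. (\<lambda>_. 1) e = (0::complex)"
    using \<open>a \<in> I\<close> by simp
  then show False by simp
qed

lemma lower_bound:
  assumes I: "V.subspace I" and E: "finite E" "indep_mod I E" and S: "finite S" "E \<subseteq> M I S"
  shows "card E \<le> card S"
proof -
  have "\<forall>e\<in>E. \<exists>i. i \<in> I \<and> e - i \<in> V.span S"
  proof
    fix e assume "e \<in> E"
    then obtain s i where "e = s + i" "s \<in> V.span S" "i \<in> I" using S(2) by (auto simp: M_def)
    then show "\<exists>i. i \<in> I \<and> e - i \<in> V.span S" by auto
  qed
  then obtain ii where ii: "\<And>e. e \<in> E \<Longrightarrow> ii e \<in> I \<and> e - ii e \<in> V.span S" by metis
  obtain B where B: "B \<subseteq> ii ` E" "V.independent B" "ii ` E \<subseteq> V.span B"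
    using V.maximal_independent_subset by blast
  have fB: "finite B" using B(1) E(1) finite_subset by blast
  have BI: "V.span B \<subseteq> I"
    using B(1) ii I by (intro V.span_minimal) auto
  have disj: "E \<inter> B = {}"
  proof (rule ccontr)
    assume "E \<inter> B \<noteq> {}"
    then obtain b where "b \<in> E" "b \<in> B" by blast
    then have "b \<in> I" using BI V.span_base by blast
    then show False using indep_mod_notin[OF E(2) E(1) \<open>b \<in> E\<close>] by simp
  qed
  have indEB: "V.independent (E \<union> B)"
  proof
    assume "V.dependent (E \<union> B)"
    then obtain u where u: "\<exists>v\<in>E \<union> B. u v \<noteq> 0" "(\<Sum>v\<in>E \<union> B. smul (u v) v) = 0"
      using V.dependent_finite[of "E \<union> B"] E(1) fB by auto
    have "(\<Sum>v\<in>E \<union> B. smul (u v) v) = (\<Sum>v\<in>E. smul (u v) v) + (\<Sum>v\<in>B. smul (u v) v)"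
      by (rule sum.union_disjoint[OF E(1) fB disj])
    then have "(\<Sum>v\<in>E. smul (u v) v) + (\<Sum>v\<in>B. smul (u v) v) = 0"
      using u(2) by simp
    then have eq: "(\<Sum>v\<in>E. smul (u v) v) = - (\<Sum>v\<in>B. smul (u v) v)"
      by (simp add: eq_neg_iff_add_eq_0)
    have "(\<Sum>v\<in>B. smul (u v) v) \<in> V.span B"
      by (intro V.span_sum V.span_scale V.span_base)
    then have "(\<Sum>v\<in>E. smul (u v) v) \<in> I" unfolding eq using BI V.span_neg by blast
    then have uE: "\<forall>v\<in>E. u v = 0" using E(2) unfolding indep_mod_def by blast
    then have "(\<Sum>v\<in>E. smul (u v) v) = 0" by (simp add: smul_def)
    then have "(\<Sum>v\<in>B. smul (u v) v) = 0" using eq by simp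
    then have "\<forall>v\<in>B. u v = 0"
      using V.dependent_finite[OF fB] B(2) by blast
    then show False using u(1) uE by blast
  qed
  have sub: "E \<union> B \<subseteq> V.span (S \<union> B)"
  proof
    fix x assume "x \<in> E \<union> B"
    then show "x \<in> V.span (S \<union> B)"
    proof
      assume x: "x \<in> E"
      have "x - ii x \<in> V.span (S \<union> B)" using ii[OF x] V.span_mono[of S "S \<union> B"] by blast
      moreover have "ii x \<in> V.span (S \<union> B)" using B(3) x V.span_mono[of B "S \<union> B"] by blast
      ultimately have "(x - ii x) + ii x \<in> V.span (S \<union> B)" by (rule V.span_add)
      then show ?thesis by simp
    qed (simp add: V.span_base)
  qed
  have "card (E \<union> B) \<le> card (S \<union> B)"
    using V.independent_span_bound[OF _ indEB sub] S(1) fB by blast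
  moreover have "card (E \<union> B) = card E + card B" using card_Un_disjoint[OF E(1) fB disj] .
  moreover have "card (S \<union> B) \<le> card S + card B" by (rule card_Un_le)
  ultimately show ?thesis by simp
qed

lemma drop_one:
  assumes I: "V.subspace I" and sp: "spans_mod R I S" and x: "x \<in> R" "x \<notin> I"
  shows "\<exists>S'. spans_mod R I S' \<and> x \<in> S' \<and> card S' \<le> card S"
proof -
  have fS: "finite S" and SR: "S \<subseteq> R" and RM: "R \<subseteq> M I S" using sp by (auto simp: spans_mod_M)
  obtain s i where si: "x = s + i" "s \<in> V.span S" "i \<in> I" using RM x(1) by (auto simp: M_def)
  obtain u where u: "s = (\<Sum>v\<in>S. smul (u v) v)" using si(2) V.span_finite[OF fS] by auto
  obtain s0 where s0: "s0 \<in> S" "u s0 \<noteq> 0"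
  proof (rule ccontr)
    assume "\<not> thesis"
    then have "\<forall>v\<in>S. u v = 0" using that by blast
    then have "s = 0" using u by (simp add: smul_def)
    then show False using si x(2) by simp
  qed
  define S' where "S' = insert x (S - {s0})"
  have "s = smul (u s0) s0 + (\<Sum>v\<in>S - {s0}. smul (u v) v)" using u sum.remove[OF fS s0(1)] by simp
  then have "smul (u s0) s0 = x - i - (\<Sum>v\<in>S - {s0}. smul (u v) v)" using si(1) by (simp add: algebra_simps)
  then have "smul (u s0) s0 = (x - (\<Sum>v\<in>S - {s0}. smul (u v) v)) + (- i)"
    by (simp only: diff_conv_add_uminus ac_simps)
  then have "smul (inverse (u s0)) (smul (u s0) s0) = smul (inverse (u s0)) ((x - (\<Sum>v\<in>S - {s0}. smul (u v) v)) + (- i))"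
    by (rule arg_cong)
  then have s0eq: "s0 = smul (inverse (u s0)) (x - (\<Sum>v\<in>S - {s0}. smul (u v) v)) + smul (inverse (u s0)) (- i)"
    using s0(2) by (simp only: V.scale_scale V.scale_right_distrib) simp
  have "smul (inverse (u s0)) (x - (\<Sum>v\<in>S - {s0}. smul (u v) v)) \<in> V.span S'"
    unfolding S'_def
    by (intro V.span_scale V.span_diff V.span_sum V.span_base) auto
  moreover have "smul (inverse (u s0)) (- i) \<in> I" using I si(3) V.subspace_neg V.subspace_scale by blast
  ultimately have "s0 \<in> M I S'" unfolding M_def using s0eq by blast
  moreover have "S - {s0} \<subseteq> M I S'"
  proof
    fix y assume "y \<in> S - {s0}"
    then have "y \<in> V.span S'" unfolding S'_def by (intro V.span_base) blast
    then show "y \<in> M I S'" using span_M[OF I, of S'] by blast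
  qed
  ultimately have "S \<subseteq> M I S'" by blast
  then have "M I S \<subseteq> M I S'" by (rule M_mono[OF I])
  then have "spans_mod R I S'" using RM SR fS x(1) by (auto simp: spans_mod_M S'_def)
  moreover have "card S' \<le> card S"
  proof -
    have "card S > 0" using fS s0(1) card_gt_0_iff by blast
    then show ?thesis using fS s0(1) by (simp add: S'_def card_insert_if card_Diff_singleton_if)
  qed
  ultimately show ?thesis by (auto simp: S'_def)
qed

lemma minimal_indep:
  assumes I: "V.subspace I" and sp: "spans_mod R I S" and mn: "\<And>S'. spans_mod R I S' \<Longrightarrow> card S \<le> card S'"
  shows "indep_mod I S"
  unfolding indep_mod_def
proof (intro allI impI ballI, rule ccontr)
  fix c s0 assume ci: "(\<Sum>e\<in>S. smul (c e) e) \<in> I" and s0: "s0 \<in> S" "c s0 \<noteq> 0"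
  have fS: "finite S" and SR: "S \<subseteq> R" and RM: "R \<subseteq> M I S" using sp by (auto simp: spans_mod_M)
  define i where "i = (\<Sum>e\<in>S. smul (c e) e)"
  have "i = smul (c s0) s0 + (\<Sum>v\<in>S - {s0}. smul (c v) v)" using sum.remove[OF fS s0(1)] i_def by simp
  then have "smul (c s0) s0 = i - (\<Sum>v\<in>S - {s0}. smul (c v) v)" by simp
  then have "smul (inverse (c s0)) (smul (c s0) s0) = smul (inverse (c s0)) (i - (\<Sum>v\<in>S - {s0}. smul (c v) v))"
    by (rule arg_cong)
  then have "s0 = smul (inverse (c s0)) (i - (\<Sum>v\<in>S - {s0}. smul (c v) v))"
    using s0(2) by simp
  then have "s0 = smul (inverse (c s0)) i - smul (inverse (c s0)) (\<Sum>v\<in>S - {s0}. smul (c v) v)"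
    by (simp only: V.scale_right_diff_distrib)
  then have s0eq: "s0 = smul (inverse (c s0)) (- (\<Sum>v\<in>S - {s0}. smul (c v) v)) + smul (inverse (c s0)) i"
    by (simp only: V.scale_minus_right diff_conv_add_uminus add.commute)
  have "smul (inverse (c s0)) (- (\<Sum>v\<in>S - {s0}. smul (c v) v)) \<in> V.span (S - {s0})"
    by (intro V.span_scale V.span_neg V.span_sum V.span_base) auto
  moreover have "smul (inverse (c s0)) i \<in> I" using I ci i_def V.subspace_scale by blast
  ultimately have "s0 \<in> M I (S - {s0})" unfolding M_def using s0eq by blast
  moreover have "S - {s0} \<subseteq> M I (S - {s0})" by (rule order.trans[OF V.span_superset span_M[OF I]])
  ultimately have "S \<subseteq> M I (S - {s0})"
  proof (intro subsetI)
    fix y assume "s0 \<in> M I (S - {s0})" "S - {s0} \<subseteq> M I (S - {s0})" "y \<in> S"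
    then show "y \<in> M I (S - {s0})" by (cases "y = s0") auto
  qed
  then have "M I S \<subseteq> M I (S - {s0})" by (rule M_mono[OF I])
  then have "R \<subseteq> M I (S - {s0})" using RM by (rule order.trans[rotated])
  moreover have "S - {s0} \<subseteq> R" using SR by (rule order.trans[rotated]) auto
  ultimately have "spans_mod R I (S - {s0})" using fS unfolding spans_mod_M by simp
  then have "card S \<le> card (S - {s0})" by (rule mn)
  moreover have "card S > 0" using fS s0(1) card_gt_0_iff by blast
  moreover have "card (S - {s0}) = card S - 1" using fS s0(1) by (simp add: card_Diff_singleton_if)
  ultimately show False by linarith
qed


lemma quot_lower:
  assumes "\<And>S. spans_mod R I S \<Longrightarrow> k \<le> card S"
  shows "enat k \<le> quot_dim R I"
proof (cases "\<exists>S. spans_mod R I S")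
  case True
  then have "\<exists>n S. spans_mod R I S \<and> card S = n" by blast
  then obtain S where "spans_mod R I S" "card S = (LEAST n. \<exists>S. spans_mod R I S \<and> card S = n)"
    using LeastI_ex[of "\<lambda>n. \<exists>S. spans_mod R I S \<and> card S = n"] by blast
  moreover have "k \<le> card S" using assms \<open>spans_mod R I S\<close> by blast
  ultimately have "k \<le> (LEAST n. \<exists>S. spans_mod R I S \<and> card S = n)" by simp
  then show ?thesis using True by (simp add: quot_dim_def)
qed (simp add: quot_dim_def)

lemma quot_eq:
  assumes "spans_mod R I S0"
  shows "\<exists>S. spans_mod R I S \<and> quot_dim R I = enat (card S) \<and> (\<forall>S'. spans_mod R I S' \<longrightarrow> card S \<le> card S')"
proof -
  have ex: "\<exists>n S. spans_mod R I S \<and> card S = n" using assms by blast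
  then obtain S where S: "spans_mod R I S" "card S = (LEAST n. \<exists>S. spans_mod R I S \<and> card S = n)"
    using LeastI_ex[of "\<lambda>n. \<exists>S. spans_mod R I S \<and> card S = n"] by blast
  have "\<forall>S'. spans_mod R I S' \<longrightarrow> card S \<le> card S'"
    using S(2) by (auto intro: Least_le)
  moreover have "quot_dim R I = enat (card S)" using S assms by (auto simp: quot_dim_def)
  ultimately show ?thesis using S(1) by blast
qed

lemma ideal_subspace: "V.subspace (ideal_gen X G)"
  unfolding V.subspace_def
  using ideal_gen_zero ideal_gen_add ideal_gen_smul by blast

lemma sum_sng: "(\<Sum>i\<in>A. sng k (f i)) = sng k (\<Sum>i\<in>A. f i)"
  by (induction A rule: infinite_finite_induct) (simp_all add: single_add)

lemma finite_deg: "finite {m :: ('v::finite) \<Rightarrow>\<^sub>0 nat. total_deg m \<le> d}"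
proof -
  have inj: "inj (lk :: ('v \<Rightarrow>\<^sub>0 nat) \<Rightarrow> _)"
  proof (rule injI)
    fix a b :: "'v \<Rightarrow>\<^sub>0 nat" assume "lk a = lk b"
    then show "a = b" by (intro poly_mapping_eqI) simp
  qed
  have fin: "finite {f :: 'v \<Rightarrow> nat. \<forall>x. (x \<in> UNIV \<longrightarrow> f x \<in> {..d}) \<and> (x \<notin> UNIV \<longrightarrow> f x = 0)}"
    by (rule finite_set_of_finite_funs) simp_all
  have "{m :: 'v \<Rightarrow>\<^sub>0 nat. total_deg m \<le> d} \<subseteq> lk -` {f. \<forall>x. (x \<in> UNIV \<longrightarrow> f x \<in> {..d}) \<and> (x \<notin> UNIV \<longrightarrow> f x = 0)}"
  proof
    fix m :: "'v \<Rightarrow>\<^sub>0 nat" assume "m \<in> {m. total_deg m \<le> d}"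
    then have "total_deg m \<le> d" by simp
    have "\<And>x. lk m x \<le> total_deg m" unfolding total_deg_UNIV by (rule member_le_sum) simp_all
    then have "\<And>x. lk m x \<le> d" using \<open>total_deg m \<le> d\<close> order.trans by blast
    then show "m \<in> lk -` {f. \<forall>x. (x \<in> UNIV \<longrightarrow> f x \<in> {..d}) \<and> (x \<notin> UNIV \<longrightarrow> f x = 0)}"
      by simp
  qed
  then show ?thesis by (rule finite_subset[OF _ finite_vimageI[OF fin inj]])
qed

lemma ex_span:
  assumes F: "F \<in> Hom X d" and G: "perp X F \<subseteq> G"
  shows "\<exists>S. spans_mod (Poly X) (ideal_gen X G) (S :: ('v::finite) mpoly set)"
proof -
  define S where "S = (\<lambda>m. sng m (1::complex)) ` {m. ks m \<subseteq> X \<and> total_deg m \<le> d}"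
  have fS: "finite S" unfolding S_def using finite_deg[of d] by (auto intro: finite_subset)
  have SP: "S \<subseteq> Poly X" unfolding S_def by (auto intro: Poly_sng)
  have "Poly X \<subseteq> M (ideal_gen X G) S"
  proof
    fix p assume p: "p \<in> Poly X"
    define low where "low = (\<Sum>m\<in>{m\<in>ks p. total_deg m \<le> d}. sng m (lk p m))"
    have llow: "lk low k = (if total_deg k \<le> d then lk p k else 0)" for k
    proof -
      have "(\<Sum>m\<in>{m\<in>ks p. total_deg m \<le> d}. lk (sng m (lk p m)) k) = (if total_deg k \<le> d then lk p k else 0)"
        by (cases "k \<in> ks p") (auto simp: lookup_single when_def in_keys_iff)
      then show ?thesis by (simp add: low_def lookup_sum)
    qed
    have "low \<in> V.span S" unfolding low_def
    proof (rule V.span_sum)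
      fix m assume m: "m \<in> {m\<in>ks p. total_deg m \<le> d}"
      then have "ks m \<subseteq> X" using p by (auto simp: Poly_iff)
      then have "sng m 1 \<in> S" using m by (auto simp: S_def)
      then have "smul (lk p m) (sng m 1) \<in> V.span S" by (intro V.span_scale V.span_base)
      then show "sng m (lk p m) \<in> V.span S" by (simp add: smul_sng)
    qed
    moreover have "p - low \<in> ideal_gen X G"
    proof -
      have lowP: "low \<in> Poly X" unfolding low_def
        by (rule Poly_sum) (use p in \<open>auto simp: Poly_iff intro!: Poly_sng\<close>)
      have "\<forall>\<alpha>\<in>ks (p - low). total_deg \<alpha> > d"
      proof
        fix \<alpha> assume "\<alpha> \<in> ks (p - low)"
        then have "lk p \<alpha> - lk low \<alpha> \<noteq> 0" by (simp add: in_keys_iff lookup_minus)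
        then show "total_deg \<alpha> > d" using llow[of \<alpha>] by (auto split: if_splits)
      qed
      moreover have "\<forall>\<beta>\<in>ks F. total_deg \<beta> = d" using F by (simp add: Hom_iff)
      ultimately have "act (p - low) F = 0" by (rule act_high)
      moreover have "p - low \<in> Poly X" using p lowP by (rule Poly_minus)
      ultimately have "p - low \<in> G" using G by (auto simp: perp_def)
      then show ?thesis by (rule ideal_gen_gen)
    qed
    ultimately have "low + (p - low) \<in> M (ideal_gen X G) S" unfolding M_def by blast
    then show "p \<in> M (ideal_gen X G) S" by simp
  qed
  then show ?thesis using fS SP by (auto simp: spans_mod_M)
qed


context
  fixes X Y :: "('v::finite) set" and F1 F2 l1 l2 :: "'v mpoly" and d :: nat
  assumes XY: "X \<inter> Y = {}" "X \<union> Y = UNIV" and d2: "d \<ge> 2"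
    and F1: "F1 \<in> Hom X d" and F2: "F2 \<in> Hom Y d"
    and l1: "l1 \<in> LinForms X" and l2: "l2 \<in> LinForms Y"
    and n1: "act l1 F1 \<noteq> 0" and n2: "act l2 F2 \<noteq> 0"
begin

lemma YX': "Y \<inter> X = {}" "Y \<union> X = UNIV" using XY by blast+

lemmas ctxX = XY d2 F1 F2 l1 l2 n1 n2
lemmas ctxY = YX' d2 F2 F1 l2 l1 n2 n1

lemma part2:
  "quot_dim (Poly X) (ideal_gen X (perp X F1 \<union> {l1})) + quot_dim (Poly Y) (ideal_gen Y (perp Y F2 \<union> {l2}))
   \<le> quot_dim UNIV (ideal_gen UNIV (perp UNIV (F1 + F2) \<union> {l1 + l2}))"
proof -
  define I where "I = ideal_gen UNIV (perp UNIV (F1 + F2) \<union> {l1 + l2})"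
  define I1 where "I1 = ideal_gen X (perp X F1 \<union> {l1})"
  define I2 where "I2 = ideal_gen Y (perp Y F2 \<union> {l2})"
  have sI: "V.subspace I" and sI1: "V.subspace I1" and sI2: "V.subspace I2"
    by (simp_all add: I_def I1_def I2_def ideal_subspace)
  have KX: "restr X p \<in> I1" if "p \<in> I" for p
    using K[OF ctxX] that by (simp add: I_def I1_def)
  have KY: "restr Y p \<in> I2" if "p \<in> I" for p
    using K[OF ctxY] that by (simp add: I_def I2_def add.commute)
  have l1n: "l1 \<notin> I" using l1_notin[OF ctxX] by (simp add: I_def)
  have l1P: "l1 \<in> Poly X" using l1 by (simp add: LinForms_def Hom_iff)
  have rl1: "restr Y l1 = 0" by (rule restr_l1[OF ctxX])
  have l1I1: "l1 \<in> I1" unfolding I1_def by (rule ideal_gen_gen) simp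
  obtain S1 where S1: "spans_mod (Poly X) I1 S1" "quot_dim (Poly X) I1 = enat (card S1)"
      "\<forall>S'. spans_mod (Poly X) I1 S' \<longrightarrow> card S1 \<le> card S'"
    using quot_eq ex_span[OF F1, of "perp X F1 \<union> {l1}"] unfolding I1_def by blast
  obtain S2 where S2: "spans_mod (Poly Y) I2 S2" "quot_dim (Poly Y) I2 = enat (card S2)"
      "\<forall>S'. spans_mod (Poly Y) I2 S' \<longrightarrow> card S2 \<le> card S'"
    using quot_eq ex_span[OF F2, of "perp Y F2 \<union> {l2}"] unfolding I2_def by blast
  have F2nz: "F2 \<noteq> 0" using n2 by auto
  have "\<forall>a\<in>perp Y F2 \<union> {l2}. lk a 0 = 0"
  proof
    fix a assume "a \<in> perp Y F2 \<union> {l2}"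
    then show "lk a 0 = 0"
    proof
      assume "a \<in> perp Y F2"
      then show ?thesis using perp_const[OF F2 F2nz] by (simp add: perp_def)
    next
      assume "a \<in> {l2}"
      moreover have "0 \<notin> ks l2" using l2 by (auto simp: LinForms_def Hom_iff total_deg_def)
      ultimately show ?thesis by (simp add: in_keys_iff)
    qed
  qed
  then have one_notin: "1 \<notin> I2" using ideal_const[of "perp Y F2 \<union> {l2}" 1 Y] by (auto simp: I2_def)
  obtain S2' where S2': "spans_mod (Poly Y) I2 S2'" "1 \<in> S2'" "card S2' \<le> card S2"
    using drop_one[OF sI2 S2(1) Poly_one one_notin] by blast
  have cS2: "card S2' = card S2" using S2(3) S2'(1,3) by (simp add: le_antisym)
  have ind2: "indep_mod I2 S2'"
    by (rule minimal_indep[OF sI2 S2'(1)]) (use S2(3) cS2 in auto)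
  have ind1: "indep_mod I1 S1"
    by (rule minimal_indep[OF sI1 S1(1)]) (use S1(3) in auto)
  have fS1: "finite S1" and S1P: "S1 \<subseteq> Poly X" using S1(1) by (auto simp: spans_mod_def)
  have fS2: "finite S2'" and S2P: "S2' \<subseteq> Poly Y" using S2'(1) by (auto simp: spans_mod_def)
  have disj1: "S1 \<inter> (S2' - {1}) = {}"
  proof (rule ccontr)
    assume "S1 \<inter> (S2' - {1}) \<noteq> {}"
    then obtain t where t: "t \<in> S1" "t \<in> S2'" "t \<noteq> 1" by blast
    have tX: "t \<in> Poly X" and tY: "t \<in> Poly Y" using t S1P S2P by auto
    define k where "k = lk t 0"
    have tk: "t = sng 0 k" using restr_Poly_other[OF XY(1) tY] restr_id[OF tX] by (simp add: k_def)
    have "{t, 1} \<subseteq> S2'" using t(2) S2'(2) by simp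
    then have ind: "indep_mod I2 {t, 1}" by (rule indep_mod_subset[OF ind2 _ fS2])
    define c where "c v = (if v = t then 1 else - k)" for v
    have "(\<Sum>e\<in>{t, 1}. smul (c e) e) = smul 1 t + smul (- k) 1" using t(3) by (simp add: c_def)
    also have "\<dots> = sng 0 k + sng 0 (- k)" by (simp add: tk smul_def)
    also have "\<dots> = 0" by (metis single_add add.right_inverse single_zero)
    finally have "(\<Sum>e\<in>{t, 1}. smul (c e) e) \<in> I2" using ideal_gen_zero by (simp add: I2_def)
    then have "c t = 0" using ind unfolding indep_mod_def by blast
    then show False by (simp add: c_def)
  qed
  have l1S1: "l1 \<notin> S1" using indep_mod_notin[OF ind1 fS1] l1I1 by blast
  have l1nY: "l1 \<notin> Poly Y"
  proof
    assume "l1 \<in> Poly Y"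
    then have "l1 = 0" using restr_id[of l1 Y] rl1 by simp
    then show False using n1 by simp
  qed
  have l1S2: "l1 \<notin> S2' - {1}" using S2P l1nY by blast
  define E where "E = (S1 \<union> (S2' - {1})) \<union> {l1}"
  have fE: "finite E" using fS1 fS2 by (simp add: E_def)
  have disj2: "(S1 \<union> (S2' - {1})) \<inter> {l1} = {}" using l1S1 l1S2 by blast
  have cE: "card E = card S1 + card S2'"
  proof -
    have "card E = card (S1 \<union> (S2' - {1})) + 1"
      unfolding E_def using card_Un_disjoint[OF _ _ disj2] fS1 fS2 by simp
    also have "card (S1 \<union> (S2' - {1})) = card S1 + card (S2' - {1})"
      using card_Un_disjoint[OF fS1 _ disj1] fS2 by simp
    also have "card (S2' - {1}) = card S2' - 1" using S2'(2) fS2 by simp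
    finally have "card E = card S1 + (card S2' - 1) + 1" .
    moreover have "card S2' > 0" using S2'(2) fS2 card_gt_0_iff by blast
    ultimately show ?thesis by simp
  qed
  have indE: "indep_mod I E"
    unfolding indep_mod_def
  proof (intro allI impI)
    fix c assume cI: "(\<Sum>e\<in>E. smul (c e) e) \<in> I"
    define A1 where "A1 = (\<Sum>e\<in>S1. smul (c e) e)"
    define A2 where "A2 = (\<Sum>e\<in>S2' - {1}. smul (c e) e)"
    have sumE: "(\<Sum>e\<in>E. smul (c e) e) = A1 + A2 + smul (c l1) l1"
      unfolding E_def A1_def A2_def
      using sum.union_disjoint[OF _ _ disj2, of "\<lambda>e. smul (c e) e"] sum.union_disjoint[OF fS1 _ disj1, of "\<lambda>e. smul (c e) e"] fS1 fS2
      by simp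
    have A1P: "A1 \<in> Poly X" unfolding A1_def using S1P by (intro Poly_sum Poly_smul) auto
    have A2P: "A2 \<in> Poly Y" unfolding A2_def using S2P by (intro Poly_sum Poly_smul) auto
    define k where "k = (\<Sum>e\<in>S1. c e * lk e 0)"
    have rA1: "restr Y A1 = smul k 1"
    proof -
      have "restr Y A1 = (\<Sum>e\<in>S1. smul (c e) (sng 0 (lk e 0)))"
        unfolding A1_def restr_sum restr_smul
        using restr_Poly_other[OF YX'(1)] S1P by (intro sum.cong) auto
      also have "\<dots> = sng 0 k" by (simp add: smul_sng sum_sng k_def)
      finally show ?thesis by (simp add: smul_def)
    qed
    have "restr Y (\<Sum>e\<in>E. smul (c e) e) = smul k 1 + A2"
      unfolding sumE restr_add restr_smul rA1 restr_id[OF A2P] rl1 by simp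
    then have in2: "smul k 1 + A2 \<in> I2" using KY[OF cI] by simp
    define c2 where "c2 v = (if v = 1 then k else c v)" for v
    have "(\<Sum>e\<in>S2'. smul (c2 e) e) = smul (c2 1) 1 + (\<Sum>e\<in>S2' - {1}. smul (c2 e) e)"
      by (rule sum.remove[OF fS2 S2'(2)])
    also have "(\<Sum>e\<in>S2' - {1}. smul (c2 e) e) = A2" unfolding A2_def by (intro sum.cong) (auto simp: c2_def)
    finally have "(\<Sum>e\<in>S2'. smul (c2 e) e) \<in> I2" using in2 by (simp add: c2_def)
    then have c2z: "\<forall>e\<in>S2'. c2 e = 0" using ind2 unfolding indep_mod_def by blast
    have cz2: "\<forall>e\<in>S2' - {1}. c e = 0"
    proof
      fix e assume "e \<in> S2' - {1}"
      then have "c2 e = 0" "e \<noteq> 1" using c2z by auto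
      then show "c e = 0" by (simp add: c2_def)
    qed
    then have A20: "A2 = 0" unfolding A2_def by (intro sum.neutral) (simp add: smul_def)
    have "restr X (\<Sum>e\<in>E. smul (c e) e) = A1 + smul (c l1) l1"
      unfolding sumE A20 restr_add restr_smul restr_id[OF A1P] restr_id[OF l1P] by simp
    then have "A1 + smul (c l1) l1 \<in> I1" using KX[OF cI] by simp
    moreover have "smul (c l1) l1 \<in> I1" using l1I1 by (simp add: I1_def ideal_gen_smul)
    ultimately have "A1 + smul (c l1) l1 - smul (c l1) l1 \<in> I1" unfolding I1_def by (rule ideal_gen_diff)
    then have "A1 \<in> I1" by simp
    then have cz1: "\<forall>e\<in>S1. c e = 0" using ind1 unfolding indep_mod_def A1_def by blast
    then have A10: "A1 = 0" unfolding A1_def by (intro sum.neutral) (simp add: smul_def)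
    have "smul (c l1) l1 \<in> I" using cI sumE A10 A20 by simp
    have czl: "c l1 = 0"
    proof (rule ccontr)
      assume "c l1 \<noteq> 0"
      then have "smul (inverse (c l1)) (smul (c l1) l1) = l1" by simp
      moreover have "smul (inverse (c l1)) (smul (c l1) l1) \<in> I"
        using \<open>smul (c l1) l1 \<in> I\<close> unfolding I_def by (rule ideal_gen_smul)
      ultimately show False using l1n by simp
    qed
    show "\<forall>e\<in>E. c e = 0" using cz1 cz2 czl by (auto simp: E_def)
  qed
  have "enat (card E) \<le> quot_dim UNIV I"
  proof (rule quot_lower)
    fix S assume "spans_mod UNIV I S"
    then have "finite S" "E \<subseteq> M I S" by (auto simp: spans_mod_M)
    then show "card E \<le> card S" using lower_bound[OF sI fE indE] by blast
  qed
  then show ?thesis using S1(2) S2(2) cS2 cE by (simp add: I_def I1_def I2_def)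
qed

end


theorem mainTheorem3:
  fixes F1 F2 l1 l2 :: "('a::finite + 'b::finite) mpoly" and d :: nat
  defines "X1 \<equiv> range Inl" and "X2 \<equiv> range Inr"
  assumes "d \<ge> 2"
    and "F1 \<in> Hom X1 d" and "F2 \<in> Hom X2 d"
    and "l1 \<in> LinForms X1" and "l2 \<in> LinForms X2"
    and "l1 \<notin> perp X1 F1" and "l2 \<notin> perp X2 F2"
  shows "(ideal_gen UNIV (perp UNIV (F1 + F2) \<union> {l1 + l2})
           \<subset> ideal_gen UNIV (perp X1 F1 \<union> {l1} \<union> LinForms X2)
             \<inter> ideal_gen UNIV (perp X2 F2 \<union> {l2} \<union> LinForms X1))
         \<and> quot_dim UNIV (ideal_gen UNIV (perp UNIV (F1 + F2) \<union> {l1 + l2}))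
           \<ge> quot_dim (Poly X1) (ideal_gen X1 (perp X1 F1 \<union> {l1}))
             + quot_dim (Poly X2) (ideal_gen X2 (perp X2 F2 \<union> {l2}))"
proof -
  have XY: "X1 \<inter> X2 = {}" "X1 \<union> X2 = UNIV"
    unfolding X1_def X2_def by (auto, metis UNIV_I obj_sumE range_eqI)
  have YX: "X2 \<inter> X1 = {}" "X2 \<union> X1 = UNIV" using XY by blast+
  have d2: "d \<ge> 2" and F1: "F1 \<in> Hom X1 d" and F2: "F2 \<in> Hom X2 d"
    and l1: "l1 \<in> LinForms X1" and l2: "l2 \<in> LinForms X2"
    using assms by simp_all
  have n1: "act l1 F1 \<noteq> 0" using \<open>l1 \<notin> perp X1 F1\<close> l1 by (simp add: perp_def LinForms_def Hom_iff)
  have n2: "act l2 F2 \<noteq> 0" using \<open>l2 \<notin> perp X2 F2\<close> l2 by (simp add: perp_def LinForms_def Hom_iff)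
  note ctx = XY d2 F1 F2 l1 l2 n1 n2
  note ctxY = YX d2 F2 F1 l2 l1 n2 n1
  let ?I = "ideal_gen UNIV (perp UNIV (F1 + F2) \<union> {l1 + l2})"
  let ?J1 = "ideal_gen UNIV (perp X1 F1 \<union> {l1} \<union> LinForms X2)"
  let ?J2 = "ideal_gen UNIV (perp X2 F2 \<union> {l2} \<union> LinForms X1)"
  have sub: "?I \<subseteq> ?J1 \<inter> ?J2"
  proof
    fix p assume p: "p \<in> ?I"
    have "p \<in> ?J1" by (rule incl[OF ctx p])
    moreover have "p \<in> ?J2" using incl[OF ctxY] p by (simp add: add.commute)
    ultimately show "p \<in> ?J1 \<inter> ?J2" by blast
  qed
  have "l1 \<in> ?J1" by (rule ideal_gen_gen) simp
  moreover have "l1 \<in> ?J2" using l1 by (intro ideal_gen_gen) simp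
  moreover have "l1 \<notin> ?I" by (rule l1_notin[OF ctx])
  ultimately have "?I \<subset> ?J1 \<inter> ?J2" using sub by blast
  moreover have "quot_dim (Poly X1) (ideal_gen X1 (perp X1 F1 \<union> {l1}))
             + quot_dim (Poly X2) (ideal_gen X2 (perp X2 F2 \<union> {l2})) \<le> quot_dim UNIV ?I"
    by (rule part2[OF ctx])
  ultimately show ?thesis by simp
qed

end
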